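(* Consider the Polytope Scheduling Problem with all jobs available at time $0$, fix $\delta>0$ and $\beta\in(0,1)$, assume every $p_j$ is an integer power of $1+\delta$ and all predictions are underestimates ($\hat p_j\le p_j$), and suppose a procedure computing $\alpha$-approximate $O(1)$-preemptive schedules is given. Then the total number of preemptions performed by the epoch-based framework with parameters $\beta,\delta$ is at most $$O\Big(\frac{1}{\beta\delta}\sum_j\Big(1+\log_2\frac{p_j}{\hat p_j}\Big)\Big).$$
   Context: Polytope Scheduling Problem (PSP): jobs $j=1,\dots,n$, all available at time $0$, with processing requirements $p_j$ unknown until completion, and known predictions $\hat p_j$. A matrix $B=[b_{dj}]\in\mathbb R_{\ge0}^{D\times n}$ defines $\mathcal P=\{y\in\mathbb R^n_{\ge0}:By\le\mathbf 1\}$. A schedule selects at each time $t$ rates $y(t)\in\mathcal P$ for the unfinished jobs; job $j$ completes when $\int_0^{C_j}y_j(t)\,dt\ge p_j$. The notion of preemption is specific to the concrete problem modeled by $\mathcal P$. An $\alpha$-approximate $O(1)$-preemptive schedule for a PSP schedule of length $l$ with fixed rates $\{y_j\}_{j\in J}$ is a schedule that gives each job $j$ at least $l y_j$ units of processing, has makespan at most $\alpha l$, and uses $O(1)$ preemptions per job. Framework with parameters $\beta,\delta$: proceeds in epochs $k=1,2,\dots$ starting at $e_k$ ($e_1=0$). Let $J_k$ be the unfinished jobs at $e_k$, $n_k=|J_k|$, and $q_j(t)$ the processing $j$ received by time $t$. At $e_k$: (1) compute $y^{(k)}$ maximizing $\sum_{j\in J_k}\log y_j$ subject to $\sum_{j\in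 J_k}b_{dj}y_j\le1$ for all $d$, $y\ge0$; (2) set $u_{j,k}=(1+\delta)^{h+1}-q_j(e_k)$ where $(1+\delta)^h\le\max\{q_j(e_k),\hat p_j\}<(1+\delta)^{h+1}$, $h$ integer; (3) let $l_k$ be the length of the shortest interval such that processing at rates $y^{(k)}$ for that length makes at least $\lceil\beta n_k\rceil$ jobs of $J_k$ receive $u_{j,k}$ units, and set $v_{j,k}=\min\{u_{j,k},l_ky^{(k)}_j\}$; (4) run, starting at $e_k$, an $\alpha$-approximate $O(1)$-preemptive schedule for $J_k$ with processing requirements $v_{j,k}$, which finishes by $e_{k+1}\le e_k+\alpha l_k$; then epoch $k+1$ begins. *)

theory Defs
  imports Complex_Main
begin

text \<open>Jobs are indexed by 0..n-1, constraint rows of B by 0..D-1; B d j is b_dj.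
  Epochs are indexed from 0 (epoch k here is epoch k+1 of the paper).
  q k j is the processing job j has received by the start e k of epoch k.\<close>

definition unfinished :: "nat \<Rightarrow> (nat \<Rightarrow> real) \<Rightarrow> (nat \<Rightarrow> real) \<Rightarrow> nat set" where
  "unfinished n p qk = {j. j < n \<and> qk j < p j}"

definition feasible_rates :: "nat \<Rightarrow> (nat \<Rightarrow> nat \<Rightarrow> real) \<Rightarrow> nat set \<Rightarrow> (nat \<Rightarrow> real) \<Rightarrow> bool" where
  "feasible_rates D B S y \<longleftrightarrow> (\<forall>j\<in>S. 0 \<le> y j) \<and> (\<forall>d<D. (\<Sum>j\<in>S. B d j * y j) \<le> 1)"

text \<open>y maximizes sum_{j in S} log y_j over the feasible rates (vectors with a zero
  coordinate have objective -infinity, hence the positivity requirements).\<close>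
definition log_optimal :: "nat \<Rightarrow> (nat \<Rightarrow> nat \<Rightarrow> real) \<Rightarrow> nat set \<Rightarrow> (nat \<Rightarrow> real) \<Rightarrow> bool" where
  "log_optimal D B S y \<longleftrightarrow>
     (\<forall>j\<in>S. 0 < y j) \<and> feasible_rates D B S y \<and>
     (\<forall>y'. (\<forall>j\<in>S. 0 < y' j) \<and> feasible_rates D B S y' \<longrightarrow>
            (\<Sum>j\<in>S. ln (y' j)) \<le> (\<Sum>j\<in>S. ln (y j)))"

definition shortest_length :: "real \<Rightarrow> nat set \<Rightarrow> (nat \<Rightarrow> real) \<Rightarrow> (nat \<Rightarrow> real) \<Rightarrow> real \<Rightarrow> bool" where
  "shortest_length \<beta> S y u l \<longleftrightarrow>
     0 \<le> l \<and> int (card {j\<in>S. u j \<le> l * y j}) \<ge> \<lceil>\<beta> * real (card S)\<rceil> \<and>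
     (\<forall>l'. 0 \<le> l' \<and> l' < l \<longrightarrow> int (card {j\<in>S. u j \<le> l' * y j}) < \<lceil>\<beta> * real (card S)\<rceil>)"

text \<open>A run of the epoch framework with parameters beta, delta, using an
  alpha-approximate schedule procedure whose schedules preempt each job at most c times.
  The epoch schedule processes each job of S on requirement v k j (or until the job
  completes), finishes by e k + alpha * l k, and preempts job j exactly pi k j times.\<close>
definition framework_run ::
  "nat \<Rightarrow> nat \<Rightarrow> (nat \<Rightarrow> nat \<Rightarrow> real) \<Rightarrow> (nat \<Rightarrow> real) \<Rightarrow> (nat \<Rightarrow> real) \<Rightarrow> real \<Rightarrow> real \<Rightarrow> real \<Rightarrow> nat \<Rightarrow>
   (nat \<Rightarrow> nat \<Rightarrow> real) \<Rightarrow> (nat \<Rightarrow> nat \<Rightarrow> real) \<Rightarrow> (nat \<Rightarrow> nat \<Rightarrow> real) \<Rightarrow> (nat \<Rightarrow> real) \<Rightarrow>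
   (nat \<Rightarrow> nat \<Rightarrow> real) \<Rightarrow> (nat \<Rightarrow> real) \<Rightarrow> (nat \<Rightarrow> nat \<Rightarrow> nat) \<Rightarrow> bool" where
  "framework_run n D B p ph \<beta> \<delta> \<alpha> c q y u l v e \<pi> \<longleftrightarrow>
     e 0 = 0 \<and> (\<forall>j<n. q 0 j = 0) \<and>
     (\<forall>k. let S = unfinished n p (q k) in
        log_optimal D B S (y k) \<and>
        (\<forall>j\<in>S. \<exists>h::int. (1 + \<delta>) powi h \<le> max (q k j) (ph j) \<and>
                          max (q k j) (ph j) < (1 + \<delta>) powi (h + 1) \<and>
                          u k j = (1 + \<delta>) powi (h + 1) - q k j) \<and>
        shortest_length \<beta> S (y k) (u k) (l k) \<and>
        (\<forall>j\<in>S. v k j = min (u k j) (l k * y k j)) \<and>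
        (\<forall>j<n. q (Suc k) j = (if j \<in> S then min (p j) (q k j + v k j) else q k j)) \<and>
        e k \<le> e (Suc k) \<and> e (Suc k) \<le> e k + \<alpha> * l k \<and>
        (\<forall>j\<in>S. \<pi> k j \<le> c))"

text \<open>Preemptions performed in the first K epochs: those inside the epoch schedules, plus
  one for every job that is still unfinished at the end of an epoch (it is interrupted at
  the epoch boundary and resumed in a later epoch).\<close>
definition total_preemptions ::
  "nat \<Rightarrow> (nat \<Rightarrow> real) \<Rightarrow> (nat \<Rightarrow> nat \<Rightarrow> real) \<Rightarrow> (nat \<Rightarrow> nat \<Rightarrow> nat) \<Rightarrow> nat \<Rightarrow> nat" where
  "total_preemptions n p q \<pi> K =
     (\<Sum>k<K. (\<Sum>j\<in>unfinished n p (q k). \<pi> k j)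
             + card (unfinished n p (q k) \<inter> unfinished n p (q (Suc k))))"

end

theory Submission
  imports Defs
begin

lemma powi_le_exp:
  fixes b :: real
  assumes "1 < b" "b powi m \<le> b powi n" shows "m \<le> n"
  using power_int_strict_increasing[of n m b] assms by force

lemma powi_less_exp:
  fixes b :: real
  assumes "1 < b" "b powi m < b powi n" shows "m < n"
  using power_int_increasing[of m n b] assms by (metis linorder_not_le not_less_iff_gr_or_eq power_int_strict_increasing)

lemma ln_powi: fixes b :: real assumes "0 < b" shows "ln (b powi k) = real_of_int k * ln b"
proof -
  have "b powi k = b powr real_of_int k" using powr_real_of_int'[of b k] assms by simp
  then show ?thesis using assms by simp
qed

lemma ln_lower: fixes d :: real assumes "0 < d" shows "d / (1 + d) \<le> ln (1 + d)"
proof -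
  have "ln (1 / (1 + d)) \<le> 1 / (1 + d) - 1" using assms by (intro ln_le_minus_one) auto
  moreover have "ln (1 / (1 + d)) = - ln (1 + d)" using assms by (simp add: ln_div)
  moreover have "1 / (1 + d) - 1 = - (d / (1 + d))" using assms by (simp add: field_simps)
  ultimately show ?thesis by linarith
qed

lemma final_ineq:
  fixes d d0 r :: real
  assumes "0 < d" "d \<le> d0" "1 \<le> r"
  shows "2 + ln r / ln (1 + d) \<le> (1 + 3 * d0) / d * (1 + log 2 r)"
proof -
  have lb: "d / (1 + d) \<le> ln (1 + d)" by (rule ln_lower) (use assms in auto)
  have lpos: "0 < ln (1 + d)" using assms by simp
  have L0: "0 \<le> log 2 r" using assms by simp
  have lr: "ln r = ln 2 * log 2 r" by (simp add: log_def)
  have ln2: "ln 2 \<le> (1::real)" using ln_add_one_self_le_self[of 1] by simp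
  have "ln r \<le> log 2 r" using lr ln2 L0 by (simp add: mult_right_mono_neg mult_left_le_one_le)
  have "ln r / ln (1 + d) \<le> log 2 r / (d / (1 + d))"
    by (rule frac_le) (use \<open>ln r \<le> log 2 r\<close> lb L0 assms in auto)
  also have "\<dots> = (1 + d) / d * log 2 r" using assms by simp
  also have "\<dots> \<le> (1 + d0) / d * log 2 r" using assms L0
    by (intro mult_right_mono divide_right_mono) auto
  finally have A: "ln r / ln (1 + d) \<le> (1 + d0) / d * log 2 r" .
  have B: "2 \<le> 2 * d0 / d" using assms by (simp add: le_divide_eq)
  have C1: "(1 + d0) / d * log 2 r \<le> (1 + 3 * d0) / d * log 2 r" using assms L0
    by (intro mult_right_mono divide_right_mono) auto
  have C2: "2 * d0 / d \<le> (1 + 3 * d0) / d" using assms by (intro divide_right_mono) auto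
  have "(1 + 3 * d0) / d * (1 + log 2 r) = (1 + 3 * d0) / d + (1 + 3 * d0) / d * log 2 r"
    by (simp add: distrib_left)
  with A B C1 C2 show ?thesis by linarith
qed

lemma count_pot:
  fixes P :: "nat \<Rightarrow> nat" and F :: "nat \<Rightarrow> bool"
  assumes "\<And>k. P (Suc k) + (if F k then 1 else 0) \<le> P k"
  shows "(\<Sum>k<K. if F k then 1 else 0) + P K \<le> P 0"
proof (induction K)
  case (Suc K) then show ?case using assms[of K] by simp
qed simp


theorem mainTheorem10:
  fixes c :: nat and \<delta>0 :: real
  assumes "0 < \<delta>0"
  shows "\<exists>C>0. \<forall>(n::nat) (D::nat) (B::nat \<Rightarrow> nat \<Rightarrow> real) (p::nat \<Rightarrow> real) (ph::nat \<Rightarrow> real)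
            (\<beta>::real) (\<delta>::real) (\<alpha>::real) q y u l v e \<pi> (K::nat).
     (\<forall>d j. 0 \<le> B d j) \<and> 0 < \<beta> \<and> \<beta> < 1 \<and> 0 < \<delta> \<and> \<delta> \<le> \<delta>0 \<and>
     (\<forall>j<n. 0 < ph j \<and> ph j \<le> p j \<and> (\<exists>m::int. p j = (1 + \<delta>) powi m)) \<and>
     framework_run n D B p ph \<beta> \<delta> \<alpha> c q y u l v e \<pi>
     \<longrightarrow> real (total_preemptions n p q \<pi> K)
           \<le> C / (\<beta> * \<delta>) * (\<Sum>j<n. 1 + log 2 (p j / ph j))"
proof (intro exI[of _ "real (c + 1) * (1 + 3 * \<delta>0)"] conjI allI impI)
  show "0 < real (c + 1) * (1 + 3 * \<delta>0)" using assms by simp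
next
  fix n D :: nat and B :: "nat \<Rightarrow> nat \<Rightarrow> real" and p ph :: "nat \<Rightarrow> real"
    and \<beta> \<delta> \<alpha> :: real and q y u l v e \<pi> and K :: nat
  assume H: "(\<forall>d j. 0 \<le> B d j) \<and> 0 < \<beta> \<and> \<beta> < 1 \<and> 0 < \<delta> \<and> \<delta> \<le> \<delta>0 \<and>
     (\<forall>j<n. 0 < ph j \<and> ph j \<le> p j \<and> (\<exists>m::int. p j = (1 + \<delta>) powi m)) \<and>
     framework_run n D B p ph \<beta> \<delta> \<alpha> c q y u l v e \<pi>"
  have \<beta>pos: "0 < \<beta>" and \<delta>pos: "0 < \<delta>" and \<delta>le: "\<delta> \<le> \<delta>0" using H by auto
  have php: "\<And>j. j < n \<Longrightarrow> 0 < ph j \<and> ph j \<le> p j" using H by auto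
  have pm: "\<And>j. j < n \<Longrightarrow> \<exists>m::int. p j = (1 + \<delta>) powi m" using H by auto
  have FR: "framework_run n D B p ph \<beta> \<delta> \<alpha> c q y u l v e \<pi>" using H by auto
  define b where "b = 1 + \<delta>"
  have b1: "1 < b" using \<delta>pos b_def by simp
  define S where "S k = unfinished n p (q k)" for k
  have Sn: "\<And>k j. j \<in> S k \<longleftrightarrow> j < n \<and> q k j < p j" by (simp add: S_def unfinished_def)
  have finS: "\<And>k. finite (S k)" by (simp add: S_def unfinished_def)
  have FRk: "\<And>k. let S = unfinished n p (q k) in
        log_optimal D B S (y k) \<and>
        (\<forall>j\<in>S. \<exists>h::int. (1 + \<delta>) powi h \<le> max (q k j) (ph j) \<and>
                          max (q k j) (ph j) < (1 + \<delta>) powi (h + 1) \<and>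
                          u k j = (1 + \<delta>) powi (h + 1) - q k j) \<and>
        shortest_length \<beta> S (y k) (u k) (l k) \<and>
        (\<forall>j\<in>S. v k j = min (u k j) (l k * y k j)) \<and>
        (\<forall>j<n. q (Suc k) j = (if j \<in> S then min (p j) (q k j + v k j) else q k j)) \<and>
        e k \<le> e (Suc k) \<and> e (Suc k) \<le> e k + \<alpha> * l k \<and>
        (\<forall>j\<in>S. \<pi> k j \<le> c)"
    using FR unfolding framework_run_def by blast
  have q0: "\<And>j. j < n \<Longrightarrow> q 0 j = 0" using FR unfolding framework_run_def by blast
  have hY: "\<And>k j. j \<in> S k \<Longrightarrow> 0 < y k j"
    using FRk unfolding Let_def log_optimal_def S_def by blast
  define cond where "cond k j h \<longleftrightarrow> b powi h \<le> max (q k j) (ph j) \<and>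
     max (q k j) (ph j) < b powi (h + 1) \<and> u k j = b powi (h + 1) - q k j" for k j and h :: int
  have hU: "\<And>k j. j \<in> S k \<Longrightarrow> \<exists>h. cond k j h"
    using FRk unfolding Let_def S_def cond_def b_def by blast
  have hL: "\<And>k. shortest_length \<beta> (S k) (y k) (u k) (l k)"
    using FRk unfolding Let_def S_def by blast
  have hV: "\<And>k j. j \<in> S k \<Longrightarrow> v k j = min (u k j) (l k * y k j)"
    using FRk unfolding Let_def S_def by blast
  have hQ: "\<And>k j. j < n \<Longrightarrow> q (Suc k) j = (if j \<in> S k then min (p j) (q k j + v k j) else q k j)"
    using FRk unfolding Let_def S_def by blast
  have hPi: "\<And>k j. j \<in> S k \<Longrightarrow> \<pi> k j \<le> c"
    using FRk unfolding Let_def S_def by blast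
  define Hf where "Hf k j = (SOME h. cond k j h)" for k j
  have hH: "\<And>k j. j \<in> S k \<Longrightarrow> cond k j (Hf k j)"
    unfolding Hf_def using hU by (meson someI_ex)
  define M where "M j = (SOME m::int. p j = b powi m)" for j
  have hM: "\<And>j. j < n \<Longrightarrow> p j = b powi M j"
    unfolding M_def b_def using pm by (meson someI_ex)
  define full where "full k = {j \<in> S k. u k j \<le> l k * y k j}" for k
  define P where "P k j = (if j \<in> S k then nat (M j - Hf k j + 1) else 0)" for k j
  have hle: "\<And>k j. j \<in> S k \<Longrightarrow> Hf k j \<le> M j"
  proof -
    fix k j assume jS: "j \<in> S k"
    have "b powi Hf k j \<le> max (q k j) (ph j)" using hH[OF jS] cond_def by blast
    also have "\<dots> \<le> p j" using jS Sn php by fastforce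
    also have "\<dots> = b powi M j" using hM jS Sn by blast
    finally show "Hf k j \<le> M j" using powi_le_exp b1 by blast
  qed
  have step: "\<And>k j. j < n \<Longrightarrow> P (Suc k) j + (if j \<in> full k then 1 else 0) \<le> P k j"
  proof -
    fix k j assume jn: "j < n"
    show "P (Suc k) j + (if j \<in> full k then 1 else 0) \<le> P k j"
    proof (cases "j \<in> S k")
      case False
      then have "j \<notin> S (Suc k)" using hQ[OF jn, of k] Sn jn by auto
      then show ?thesis using False by (simp add: P_def full_def)
    next
      case jS: True
      note c0 = hH[OF jS, unfolded cond_def]
      have hk: "Hf k j \<le> M j" using hle jS .
      show ?thesis
      proof (cases "j \<in> S (Suc k)")
        case False
        have "1 \<le> nat (M j - Hf k j + 1)" using hk by simp
        then show ?thesis using jS False by (simp add: P_def full_def)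
      next
        case jS': True
        note c1 = hH[OF jS', unfolded cond_def]
        have hk': "Hf (Suc k) j \<le> M j" using hle jS' .
        have qlt: "q (Suc k) j < p j" using jS' Sn by blast
        have qeq: "q (Suc k) j = q k j + v k j" using hQ[OF jn, of k] jS qlt by (auto simp: min_def split: if_splits)
        have upos: "0 \<le> u k j" using c0 by linarith
        have lpos: "0 \<le> l k" using hL[of k] by (simp add: shortest_length_def)
        have v0: "0 \<le> v k j" using hV[OF jS] upos lpos hY[OF jS] by simp
        have mono: "Hf k j \<le> Hf (Suc k) j"
        proof -
          have "b powi Hf k j < b powi (Hf (Suc k) j + 1)" using c0 c1 qeq v0 by linarith
          then show ?thesis using powi_less_exp b1 by fastforce
        qed
        have incr: "Hf k j + 1 \<le> Hf (Suc k) j" if jf: "j \<in> full k"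
        proof -
          have "v k j = u k j" using jf hV[OF jS] by (simp add: full_def)
          then have "b powi (Hf k j + 1) < b powi (Hf (Suc k) j + 1)" using c0 c1 qeq by linarith
          then show ?thesis using powi_less_exp b1 by fastforce
        qed
        show ?thesis using jS jS' hk hk' mono incr by (auto simp: P_def)
      qed
    qed
  qed
  have perjob: "\<And>j. j < n \<Longrightarrow> real (\<Sum>k<K. if j \<in> full k then 1 else 0)
       \<le> (1 + 3 * \<delta>0) / \<delta> * (1 + log 2 (p j / ph j))"
  proof -
    fix j assume jn: "j < n"
    have cnt: "(\<Sum>k<K. if j \<in> full k then 1 else 0) + P K j \<le> P 0 j"
      by (rule count_pot) (rule step[OF jn])
    have phj: "0 < ph j" "ph j \<le> p j" using php jn by auto
    have j0: "j \<in> S 0" using Sn q0 jn phj by simp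
    note c0 = hH[OF j0, unfolded cond_def]
    have mx: "max (q 0 j) (ph j) = ph j" using q0 jn phj by simp
    have hk: "Hf 0 j \<le> M j" using hle j0 .
    have P0: "real (P 0 j) = real_of_int (M j - Hf 0 j - 1) + 2"
      using j0 hk by (simp add: P_def)
    have ratio: "b powi (M j - Hf 0 j - 1) < p j / ph j"
    proof -
      have "b powi (M j - Hf 0 j - 1) = b powi M j / b powi (Hf 0 j + 1)"
        using b1 by (simp add: power_int_diff power_int_add)
      also have "\<dots> = p j / b powi (Hf 0 j + 1)" using hM jn by simp
      also have "\<dots> < p j / ph j"
        using c0 mx phj by (intro divide_strict_left_mono) auto
      finally show ?thesis .
    qed
    have lnb: "0 < ln b" using b1 by simp
    have "real_of_int (M j - Hf 0 j - 1) * ln b < ln (p j / ph j)"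
    proof -
      have "ln (b powi (M j - Hf 0 j - 1)) < ln (p j / ph j)"
        using ratio b1 phj by (subst ln_less_cancel_iff) auto
      then show ?thesis using ln_powi b1 by simp
    qed
    then have "real_of_int (M j - Hf 0 j - 1) < ln (p j / ph j) / ln b"
      using lnb by (simp add: less_divide_eq)
    then have "real (P 0 j) \<le> 2 + ln (p j / ph j) / ln (1 + \<delta>)" using P0 b_def by simp
    also have "\<dots> \<le> (1 + 3 * \<delta>0) / \<delta> * (1 + log 2 (p j / ph j))"
      using phj \<delta>pos \<delta>le by (intro final_ineq) auto
    finally have "real (P 0 j) \<le> (1 + 3 * \<delta>0) / \<delta> * (1 + log 2 (p j / ph j))" .
    moreover have "real (\<Sum>k<K. if j \<in> full k then 1 else 0) \<le> real (P 0 j)"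
      using cnt by linarith
    ultimately show "real (\<Sum>k<K. if j \<in> full k then 1 else 0)
       \<le> (1 + 3 * \<delta>0) / \<delta> * (1 + log 2 (p j / ph j))" by linarith
  qed
  have fullsub: "\<And>k. full k \<subseteq> {..<n}" using Sn by (auto simp: full_def)
  have cardfull: "\<And>k. card (full k) = (\<Sum>j<n. if j \<in> full k then 1 else 0)"
  proof -
    fix k
    have "(\<Sum>j<n. if j \<in> full k then 1 else (0::nat)) = card ({..<n} \<inter> full k)"
      by (simp add: sum.If_cases)
    also have "\<dots> = card (full k)" using fullsub[of k] by (simp add: Int_absorb1)
    finally show "card (full k) = (\<Sum>j<n. if j \<in> full k then 1 else 0)" by simp
  qed
  have Sle: "\<And>k. \<beta> * real (card (S k)) \<le> real (card (full k))"
  proof -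
    fix k
    have ce: "\<lceil>\<beta> * real (card (S k))\<rceil> \<le> int (card (full k))"
      using hL[of k] by (simp add: shortest_length_def full_def)
    have "\<beta> * real (card (S k)) \<le> real_of_int \<lceil>\<beta> * real (card (S k))\<rceil>"
      by (rule le_of_int_ceiling)
    also have "\<dots> \<le> real_of_int (int (card (full k)))" using ce by (simp only: of_int_le_iff)
    finally show "\<beta> * real (card (S k)) \<le> real (card (full k))" by simp
  qed
  have tot: "total_preemptions n p q \<pi> K \<le> (\<Sum>k<K. (c + 1) * card (S k))"
    unfolding total_preemptions_def S_def[symmetric]
  proof (rule sum_mono)
    fix k
    have "(\<Sum>j\<in>S k. \<pi> k j) \<le> (\<Sum>j\<in>S k. c)" using hPi by (intro sum_mono) auto
    moreover have "card (S k \<inter> S (Suc k)) \<le> card (S k)" using finS by (intro card_mono) auto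
    ultimately show "(\<Sum>j\<in>S k. \<pi> k j) + card (S k \<inter> S (Suc k)) \<le> (c + 1) * card (S k)"
      by (simp add: mult.commute)
  qed
  have "real (total_preemptions n p q \<pi> K) \<le> (\<Sum>k<K. real (c + 1) * real (card (S k)))"
  proof -
    have "real (total_preemptions n p q \<pi> K) \<le> real (\<Sum>k<K. (c + 1) * card (S k))"
      using tot by (simp only: of_nat_le_iff)
    then show ?thesis by (simp add: of_nat_sum distrib_right)
  qed
  also have "\<dots> \<le> (\<Sum>k<K. real (c + 1) / \<beta> * real (card (full k)))"
  proof (rule sum_mono)
    fix k
    have "real (card (S k)) \<le> real (card (full k)) / \<beta>"
      using Sle[of k] \<beta>pos by (simp add: le_divide_eq mult.commute)
    then have "real (c + 1) * real (card (S k)) \<le> real (c + 1) * (real (card (full k)) / \<beta>)"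
      by (rule mult_left_mono) simp
    then show "real (c + 1) * real (card (S k)) \<le> real (c + 1) / \<beta> * real (card (full k))"
      by simp
  qed
  also have "\<dots> = real (c + 1) / \<beta> * (\<Sum>k<K. real (card (full k)))"
    by (simp add: sum_distrib_left)
  also have "(\<Sum>k<K. real (card (full k))) = (\<Sum>j<n. real (\<Sum>k<K. if j \<in> full k then 1 else 0))"
    unfolding cardfull of_nat_sum by (rule sum.swap)
  also have "real (c + 1) / \<beta> * \<dots> \<le> real (c + 1) / \<beta> * (\<Sum>j<n. (1 + 3 * \<delta>0) / \<delta> * (1 + log 2 (p j / ph j)))"
    using perjob \<beta>pos by (intro mult_left_mono sum_mono) auto
  also have "\<dots> = real (c + 1) / \<beta> * ((1 + 3 * \<delta>0) / \<delta> * (\<Sum>j<n. 1 + log 2 (p j / ph j)))"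
    by (simp only: sum_distrib_left)
  also have "\<dots> = real (c + 1) * (1 + 3 * \<delta>0) / (\<beta> * \<delta>) * (\<Sum>j<n. 1 + log 2 (p j / ph j))"
    by simp
  finally show "real (total_preemptions n p q \<pi> K)
           \<le> real (c + 1) * (1 + 3 * \<delta>0) / (\<beta> * \<delta>) * (\<Sum>j<n. 1 + log 2 (p j / ph j))" .
qed

end
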